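(* For each $t\in J$, the map $\Psi_t\colon A\to\hat D_t\setminus\hat I_t$ is a bijection.
   Context: Setup: $I=[-1,1]$, $J=(1,2]$, $f_t(x)=\min(t(x-1)+3,\,t(1-x)-1)$. $S$ is the circle of radius 2 with angular coordinate $y$; $D$ is the disk of radius 2 with coordinates $(y,s)\in S\times[0,1]$ (from a smooth embedding of the mapping cylinder of $y\mapsto\cos y$), $(y,0)=y\in S$, $(y,1)=\cos y\in I\subset D$. $\Upsilon(y,s)=(y,2s)$ for $s\le1/2$, $(y,1)$ for $s\ge1/2$. An unwrapping is a continuous family of orientation-preserving near-homeomorphisms $\bar f_t\colon D\to D$ with $\bar f_t$ injective on $I$, $\bar f_t(I)\subset\{s\ge1/2\}$, $\Upsilon\circ\bar f_t|_I=f_t$, the second coordinate of $\bar f_t(y,s)$ equal to $s$ for $s\le 1/2$; assume moreover $\bar f_t=\mathrm{id}$ on $S\times[0,3/4]$. $H_t=\Upsilon\circ\bar f_t$ (so $H_t|_I=f_t$), $\hat D_t=\varprojlim(D,H_t)=\{\langle z_0,z_1,\dots\rangle: H_t(z_{n+1})=z_n\}$, $\hat I_t=\varprojlim(I,f_t)\subset\hat D_t$. Let $A=S\times[0,\infty)$. Define $\Psi_t\colon A\to\hat D_t\setminus\hat I_t$ by: if $s\in[0,1)$, $\Psi_t(y,s)=\langle(y,s),(y,s/2),(y,s/4),\dots\rangle$; if $s\ge1$, let $k=\lfloor s\rfloor$, $u=s-k$, $v=(u+1)/2\in[1/2,1)$, and $\Psi_t(y,s)=\langle z_0,z_1,\dots\rangle$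 with $z_{k-j}=H_t^{\,j}(y,v)$ for $j=1,\dots,k$ (equivalently $f_t^{j-1}(H_t(y,v))$), $z_k=(y,v)$, and $z_{k+j}=(y,v/2^j)$ for $j\ge1$. *)

theory Defs
  imports "HOL-Analysis.Analysis" "HOL-Complex_Analysis.Complex_Analysis"
begin

definition Jset :: "real set" where "Jset = {1<..2}"

definition fmap :: "real \<Rightarrow> real \<Rightarrow> real" where
  "fmap t x = min (t * (x - 1) + 3) (t * (1 - x) - 1)"

definition Sset :: "complex set" where "Sset = sphere 0 2"
definition Dset :: "complex set" where "Dset = cball 0 2"

text \<open>Concrete embedding of the mapping cylinder of y \<mapsto> cos y into D:
  for w = 2 e^{iy} in S and s in [0,1], the point (y,s) of D is
  ((2-s) cos y, 2(1-s) sin y).  Thus (y,0) = y in S and (y,1) = cos y in I.\<close>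
definition coordD :: "complex \<Rightarrow> real \<Rightarrow> complex" where
  "coordD w s = Complex (Re w * (2 - s) / 2) (Im w * (1 - s))"

definition Iset :: "complex set" where "Iset = of_real ` {-1..1}"

definition Upsilon :: "complex \<Rightarrow> complex" where
  "Upsilon z = (let (w, s) = (SOME (w, s). w \<in> Sset \<and> s \<in> {0..1} \<and> z = coordD w s)
                in coordD w (min (2 * s) 1))"

definition orient_pres_homeo :: "(complex \<Rightarrow> complex) \<Rightarrow> bool" where
  "orient_pres_homeo h \<longleftrightarrow>
     (\<exists>h'. homeomorphism Dset Dset h h') \<and>
     winding_number (h \<circ> circlepath 0 2) (h 0) = 1"

definition op_near_homeo :: "(complex \<Rightarrow> complex) \<Rightarrow> bool" where
  "op_near_homeo g \<longleftrightarrow> g ` Dset \<subseteq> Dset \<and>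
     (\<forall>e>0. \<exists>h. orient_pres_homeo h \<and> (\<forall>z\<in>Dset. dist (g z) (h z) < e))"

text \<open>Unwrapping of the family f_t (with the extra assumption fbar_t = id on
  S \<times> [0,3/4]).\<close>
definition unwrapping :: "(real \<Rightarrow> complex \<Rightarrow> complex) \<Rightarrow> bool" where
  "unwrapping fbar \<longleftrightarrow>
     continuous_on (Jset \<times> Dset) (\<lambda>(t, z). fbar t z) \<and>
     (\<forall>t\<in>Jset.
        op_near_homeo (fbar t) \<and>
        inj_on (fbar t) Iset \<and>
        (\<forall>x\<in>Iset. \<exists>w\<in>Sset. \<exists>s\<in>{1/2..1}. fbar t x = coordD w s) \<and>
        (\<forall>x\<in>{-1..1}. Upsilon (fbar t (of_real x)) = of_real (fmap t x)) \<and>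
        (\<forall>w\<in>Sset. \<forall>s\<in>{0..1/2}. \<exists>w'\<in>Sset. fbar t (coordD w s) = coordD w' s) \<and>
        (\<forall>w\<in>Sset. \<forall>s\<in>{0..3/4}. fbar t (coordD w s) = coordD w s))"

definition Hmap :: "(real \<Rightarrow> complex \<Rightarrow> complex) \<Rightarrow> real \<Rightarrow> complex \<Rightarrow> complex" where
  "Hmap fbar t = Upsilon \<circ> fbar t"

definition Dhat :: "(real \<Rightarrow> complex \<Rightarrow> complex) \<Rightarrow> real \<Rightarrow> (nat \<Rightarrow> complex) set" where
  "Dhat fbar t = {z. \<forall>n. z n \<in> Dset \<and> Hmap fbar t (z (Suc n)) = z n}"

definition Ihat :: "real \<Rightarrow> (nat \<Rightarrow> complex) set" where
  "Ihat t = {z. \<forall>n. z n \<in> Iset \<and> of_real (fmap t (Re (z (Suc n)))) = z n}"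

definition Aset :: "(complex \<times> real) set" where "Aset = Sset \<times> {0..}"

definition Psi :: "(real \<Rightarrow> complex \<Rightarrow> complex) \<Rightarrow> real \<Rightarrow> complex \<times> real \<Rightarrow> nat \<Rightarrow> complex" where
  "Psi fbar t p = (case p of (w, s) \<Rightarrow>
     if s < 1 then (\<lambda>n. coordD w (s / 2 ^ n))
     else (let k = nat \<lfloor>s\<rfloor>; u = s - real k; v = (u + 1) / 2 in
           (\<lambda>n. if n < k then (Hmap fbar t ^^ (k - n)) (coordD w v)
                else coordD w (v / 2 ^ (n - k)))))"

end

theory Submission imports Defs begin

lemma S_sq: "w \<in> Sset \<Longrightarrow> (Re w)^2 + (Im w)^2 = 4"
proof -
  assume "w \<in> Sset" hence "cmod w = 2" by (simp add: Sset_def)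
  hence "(cmod w)^2 = 4" by simp
  thus ?thesis by (simp add: cmod_power2)
qed

lemma coord_Re: "Re (coordD w s) = Re w * (2 - s) / 2" by (simp add: coordD_def)
lemma coord_Im: "Im (coordD w s) = Im w * (1 - s)" by (simp add: coordD_def)

lemma F1: assumes "w \<in> Sset" "s \<in> {0..1}" shows "coordD w s \<in> Dset"
proof -
  have w: "(Re w)^2 + (Im w)^2 = 4" using S_sq assms by auto
  have a: "((2-s)/2)^2 \<le> 1" "(1-s)^2 \<le> 1" using assms
    by (intro power_le_one; simp)+
  have "(cmod (coordD w s))^2 = (Re w)^2 * ((2-s)/2)^2 + (Im w)^2 * (1-s)^2"
    unfolding cmod_power2 by (simp add: coord_Re coord_Im power2_eq_square field_simps)
  also have "\<dots> \<le> (Re w)^2 + (Im w)^2"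
    using a by (intro add_mono mult_left_le) auto
  finally have "(cmod (coordD w s))^2 \<le> 2^2" using w by simp
  hence "cmod (coordD w s) \<le> 2" by (rule power2_le_imp_le) simp
  thus ?thesis by (simp add: Dset_def)
qed

lemma F2: assumes "w \<in> Sset" shows "coordD w 1 \<in> Iset"
proof -
  have "\<bar>Re w\<bar> \<le> 2" using abs_Re_le_cmod[of w] assms by (simp add: Sset_def)
  hence "Re w / 2 \<in> {-1..1}" by auto
  moreover have "coordD w 1 = of_real (Re w / 2)" by (rule complex_eqI) (simp_all add: coordD_def)
  ultimately show ?thesis unfolding Iset_def by (metis image_eqI)
qed

definition Lv :: "real \<Rightarrow> complex \<Rightarrow> real" where
  "Lv s0 z = (Re z / (2 - s0))^2 + (Im z / (2 * (1 - s0)))^2"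

lemma Lv_coord: "s0 < 1 \<Longrightarrow> Lv s0 (coordD w s) = ((2-s)/(2-s0))^2 * ((Re w)^2/4) + ((1-s)/(1-s0))^2 * ((Im w)^2/4)"
  by (simp add: Lv_def coordD_def power2_eq_square field_simps)

lemma Lv_gt: assumes "w \<in> Sset" "0 \<le> s" "s < s0" "s0 < 1" shows "Lv s0 (coordD w s) > 1"
proof -
  define a where "a = (Re w)^2/4" define b where "b = (Im w)^2/4"
  have ab: "a + b = 1" "a \<ge> 0" "b \<ge> 0" using S_sq[OF assms(1)] by (auto simp: a_def b_def)
  have r1: "((2-s)/(2-s0)) > 1" "((1-s)/(1-s0)) > 1" using assms by auto
  define m where "m = min (((2-s)/(2-s0))^2) (((1-s)/(1-s0))^2)"
  have m1: "m > 1" using r1 by (simp add: m_def one_less_power)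
  have "((2-s)/(2-s0))^2 * a + ((1-s)/(1-s0))^2 * b \<ge> m * a + m * b"
    using ab by (intro add_mono mult_right_mono) (auto simp: m_def)
  also have "m * a + m * b = m" using ab by (simp add: distrib_left[symmetric])
  finally show ?thesis using m1 assms by (simp add: Lv_coord a_def b_def)
qed

lemma Lv_lt: assumes "w \<in> Sset" "s \<le> 1" "s0 < s" "0 \<le> s0" shows "Lv s0 (coordD w s) < 1"
proof -
  define a where "a = (Re w)^2/4" define b where "b = (Im w)^2/4"
  have ab: "a + b = 1" "a \<ge> 0" "b \<ge> 0" using S_sq[OF assms(1)] by (auto simp: a_def b_def)
  have r1: "((2-s)/(2-s0)) < 1" "((1-s)/(1-s0)) < 1" "((2-s)/(2-s0)) \<ge> 0" "((1-s)/(1-s0)) \<ge> 0"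
    using assms by auto
  define m where "m = max (((2-s)/(2-s0))^2) (((1-s)/(1-s0))^2)"
  have sq: "\<And>r::real. 0 \<le> r \<Longrightarrow> r < 1 \<Longrightarrow> r^2 < 1"
    by (metis abs_of_nonneg abs_square_less_1)
  have m1: "m < 1" unfolding m_def using r1 sq by simp
  have "((2-s)/(2-s0))^2 * a + ((1-s)/(1-s0))^2 * b \<le> m * a + m * b"
    using ab by (intro add_mono mult_right_mono) (auto simp: m_def)
  also have "m * a + m * b = m" using ab by (simp add: distrib_left[symmetric])
  finally show ?thesis using m1 assms by (simp add: Lv_coord a_def b_def)
qed

lemma Lv_eq: assumes "w \<in> Sset" "s0 < 1" shows "Lv s0 (coordD w s0) = 1"
proof -
  have "Lv s0 (coordD w s0) = (Re w)^2/4 + (Im w)^2/4" using assms by (simp add: Lv_coord)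
  thus ?thesis using S_sq[OF assms(1)] by simp
qed


lemma sq4: "0 \<le> (a::real) \<Longrightarrow> a^2 = 4 \<Longrightarrow> a = 2"
  using power2_eq_iff_nonneg[of a 2] by simp

lemma F3: assumes "w \<in> Sset" "w' \<in> Sset" "0 \<le> s" "s < 1" "0 \<le> s'" "s' < 1"
  and eq: "coordD w s = coordD w' s'" shows "w = w' \<and> s = s'"
proof -
  have ss: "s = s'"
  proof (rule ccontr)
    assume "s \<noteq> s'"
    hence "s < s' \<or> s' < s" by auto
    thus False
    proof
      assume "s < s'"
      hence "Lv s' (coordD w s) > 1" using Lv_gt assms(1-6) by auto
      moreover have "Lv s' (coordD w' s') = 1" using Lv_eq assms(1-6) by auto
      ultimately show False using eq by simp
    next
      assume "s' < s"
      hence "Lv s (coordD w' s') > 1" using Lv_gt assms(1-6) by auto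
      moreover have "Lv s (coordD w s) = 1" using Lv_eq assms(1-6) by auto
      ultimately show False using eq by simp
    qed
  qed
  have "Re w * (2 - s) / 2 = Re w' * (2 - s) / 2" "Im w * (1 - s) = Im w' * (1 - s)"
    using eq ss by (metis coord_Re, metis coord_Im)
  hence "Re w = Re w'" "Im w = Im w'" using assms by auto
  thus ?thesis using ss complex_eqI by blast
qed

lemma F4: assumes "w \<in> Sset" "0 \<le> s" "s < 1" shows "coordD w s \<notin> Iset"
proof
  assume "coordD w s \<in> Iset"
  then obtain x where x: "x \<in> {-1..1}" "coordD w s = of_real x" by (auto simp: Iset_def)
  hence "Im w * (1 - s) = 0" by (metis coord_Im Im_complex_of_real)
  hence i: "Im w = 0" using assms by simp
  hence "(Re w)^2 = 2^2" using S_sq[OF assms(1)] by simp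
  hence "\<bar>Re w\<bar> = 2" by (metis abs_of_nonneg power2_eq_iff_nonneg abs_ge_zero zero_le_numeral power2_abs)
  moreover have "Re w * (2 - s) / 2 = x" using x by (metis coord_Re Re_complex_of_real)
  ultimately have "\<bar>x\<bar> = 2 - s"
  proof -
    assume a: "\<bar>Re w\<bar> = 2" "Re w * (2 - s) / 2 = x"
    have "Re w = 2 \<or> Re w = -2" using a(1) by linarith
    thus ?thesis using a(2) assms by auto
  qed
  thus False using x assms by auto
qed

lemma F5: assumes "z \<in> Dset" shows "\<exists>w\<in>Sset. \<exists>s\<in>{0..1}. z = coordD w s"
proof (cases "z \<in> Iset")
  case True
  then obtain x where x: "x \<in> {-1..1}" "z = of_real x" by (auto simp: Iset_def)
  define w where "w = Complex (2*x) (2 * sqrt (1 - x^2))"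
  have "\<bar>x\<bar> \<le> 1" using x by auto
  hence x2: "x^2 \<le> 1" by (simp add: abs_square_le_1)
  have "(cmod w)^2 = 2^2" unfolding cmod_power2 w_def using x2 by (simp add: power_mult_distrib algebra_simps)
  hence "cmod w = 2" by (intro sq4) auto
  hence "w \<in> Sset" by (simp add: Sset_def)
  moreover have "z = coordD w 1" using x by (simp add: coordD_def w_def complex_eq_iff)
  ultimately show ?thesis by force
next
  case False
  have zn: "cmod z \<le> 2" using assms by (simp add: Dset_def)
  have L0: "Lv 0 z \<le> 1"
  proof -
    have "Lv 0 z = (cmod z)^2 / 4" by (simp add: Lv_def cmod_power2 power_divide)
    moreover have "(cmod z)^2 \<le> 2^2" using zn by (intro power_mono) auto
    ultimately show ?thesis by simp
  qed
  have "\<exists>s1. 0 \<le> s1 \<and> s1 < 1 \<and> Lv s1 z \<ge> 1"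
  proof (cases "Im z = 0")
    case False
    define s1 where "s1 = 1 - \<bar>Im z\<bar> / 2"
    have "\<bar>Im z\<bar> \<le> 2" using abs_Im_le_cmod[of z] zn by simp
    hence s1: "0 \<le> s1" "s1 < 1" using False by (auto simp: s1_def)
    have "(Im z / (2 * (1 - s1)))^2 = 1" using False
      by (simp add: s1_def power_divide)
    hence "Lv s1 z \<ge> 1" unfolding Lv_def by simp
    thus ?thesis using s1 by blast
  next
    case True
    hence "\<bar>Re z\<bar> > 1" using False unfolding Iset_def
      by (metis atLeastAtMost_iff abs_le_iff complex_surj image_eqI linorder_not_le minus_le_iff of_real_def complex_of_real_def)
    moreover have "\<bar>Re z\<bar> \<le> 2" using abs_Re_le_cmod[of z] zn by simp
    ultimately have s1: "0 \<le> 2 - \<bar>Re z\<bar>" "2 - \<bar>Re z\<bar> < 1" by auto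
    have "(Re z / (2 - (2 - \<bar>Re z\<bar>)))^2 = 1" using \<open>\<bar>Re z\<bar> > 1\<close> by (simp add: power_divide)
    hence "Lv (2 - \<bar>Re z\<bar>) z \<ge> 1" unfolding Lv_def by simp
    thus ?thesis using s1 by blast
  qed
  then obtain s1 where s1: "0 \<le> s1" "s1 < 1" "Lv s1 z \<ge> 1" by blast
  have cont: "continuous_on {0..s1} (\<lambda>s. Lv s z)"
    unfolding Lv_def using s1 by (intro continuous_intros) auto
  obtain s where s: "0 \<le> s" "s \<le> s1" "Lv s z = 1"
    using IVT'[of "\<lambda>s. Lv s z" 0 1 s1, OF L0 s1(3) s1(1) cont] by blast
  define w where "w = Complex (2 * Re z / (2 - s)) (Im z / (1 - s))"
  have "s < 1" using s s1 by simp
  have e1: "(Im z / (2*(1-s)))^2 = (Im z/(1-s))^2/4" by (simp add: power_divide power_mult_distrib power2_eq_square algebra_simps)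
  have e2: "(2*Re z/(2-s))^2 = 4*(Re z/(2-s))^2" by (simp add: power_divide power_mult_distrib)
  have "(cmod w)^2 = 4 * Lv s z" unfolding cmod_power2 w_def Lv_def e1
    using e2 by simp
  hence "(cmod w)^2 = 2^2" using s by simp
  hence "cmod w = 2" by (intro sq4) auto
  hence "w \<in> Sset" by (simp add: Sset_def)
  moreover have "z = coordD w s" using s s1 by (simp add: coordD_def w_def complex_eq_iff)
  ultimately show ?thesis using s s1 by force
qed


lemma Ups_spec: assumes "z \<in> Dset"
  shows "\<exists>w s. w \<in> Sset \<and> s \<in> {0..1} \<and> z = coordD w s \<and> Upsilon z = coordD w (min (2 * s) 1)"
proof -
  define P where "P = (\<lambda>(w, s). w \<in> Sset \<and> s \<in> {0..(1::real)} \<and> z = coordD w s)"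
  obtain w0 s0 where "P (w0, s0)" using F5[OF assms] by (auto simp: P_def)
  hence "P (SOME p. P p)" by (rule someI)
  moreover obtain w s where ws: "(SOME p. P p) = (w, s)" by (cases "SOME p. P p") auto
  ultimately have "P (w, s)" by simp
  moreover have "Upsilon z = coordD w (min (2 * s) 1)"
    using ws unfolding Upsilon_def P_def by simp
  ultimately show ?thesis unfolding P_def by auto
qed

lemma Ups_D: "z \<in> Dset \<Longrightarrow> Upsilon z \<in> Dset"
  using Ups_spec F1 by fastforce

lemma U1: assumes "w \<in> Sset" "0 \<le> s" "s < 1"
  shows "Upsilon (coordD w s) = coordD w (min (2 * s) 1)"
proof -
  have "coordD w s \<in> Dset" using F1 assms by auto
  then obtain w' s' where ws: "w' \<in> Sset" "s' \<in> {0..1}" "coordD w s = coordD w' s'"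
    "Upsilon (coordD w s) = coordD w' (min (2 * s') 1)" using Ups_spec by blast
  have "s' \<noteq> 1"
  proof
    assume "s' = 1" hence "coordD w s \<in> Iset" using ws F2 by simp
    thus False using F4 assms by blast
  qed
  hence "w = w' \<and> s = s'" using F3[of w w' s s'] ws assms by auto
  thus ?thesis using ws by simp
qed

lemma fmap_range: assumes "t \<in> Jset" "x \<in> {-1..1}" shows "fmap t x \<in> {-1..1}"
proof -
  have t: "1 < t" "t \<le> 2" using assms by (auto simp: Jset_def)
  have x: "-1 \<le> x" "x \<le> 1" using assms by auto
  have "fmap t x \<le> 1"
  proof (cases "x \<le> 1 - 2/t")
    case True
    hence "t * x \<le> t - 2" using t by (simp add: field_simps)
    hence "t * (x - 1) + 3 \<le> 1" by (simp add: algebra_simps)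
    thus ?thesis by (simp add: fmap_def)
  next
    case False
    hence "t * x > t - 2" using t by (simp add: field_simps)
    hence "t * (1 - x) - 1 < 1" by (simp add: algebra_simps)
    thus ?thesis by (simp add: fmap_def)
  qed
  moreover have "t * (x - 1) + 3 \<ge> -1"
  proof -
    have "t * (x - 1) \<ge> t * (-2)" using t x by (intro mult_left_mono) auto
    hence "t * (x - 1) \<ge> -4" using t by linarith
    thus ?thesis by simp
  qed
  moreover have "t * (1 - x) - 1 \<ge> -1" using t x by simp
  ultimately show ?thesis by (simp add: fmap_def)
qed

context
  fixes fbar :: "real \<Rightarrow> complex \<Rightarrow> complex" and t :: real
  assumes unw: "unwrapping fbar" and tJ: "t \<in> Jset"
begin

lemma gnh: "op_near_homeo (fbar t)" using unw tJ by (simp add: unwrapping_def)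

lemma gD: "z \<in> Dset \<Longrightarrow> fbar t z \<in> Dset"
  using gnh by (auto simp: op_near_homeo_def)

lemma gid: "w \<in> Sset \<Longrightarrow> s \<in> {0..3/4} \<Longrightarrow> fbar t (coordD w s) = coordD w s"
  using unw tJ by (simp add: unwrapping_def)

lemma H_D: "z \<in> Dset \<Longrightarrow> Hmap fbar t z \<in> Dset"
  by (simp add: Hmap_def gD Ups_D)

lemma H_low: assumes "w \<in> Sset" "0 \<le> s" "s \<le> 3/4"
  shows "Hmap fbar t (coordD w s) = coordD w (min (2 * s) 1)"
  using assms gid U1 by (simp add: Hmap_def)

lemma H_real: "x \<in> {-1..1} \<Longrightarrow> Hmap fbar t (of_real x) = of_real (fmap t x)"
  using unw tJ by (simp add: unwrapping_def Hmap_def)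

lemma HI: assumes "z \<in> Iset" shows "Hmap fbar t z \<in> Iset"
proof -
  obtain x where "x \<in> {-1..1}" "z = of_real x" using assms by (auto simp: Iset_def)
  thus ?thesis using H_real fmap_range[OF tJ] by (auto simp: Iset_def)
qed

lemma G4: assumes w: "w \<in> Sset" and sig: "3/4 < \<sigma>" "\<sigma> \<le> 1"
  and w': "w' \<in> Sset" and s': "0 \<le> s'" "s' < 3/4"
  shows "fbar t (coordD w \<sigma>) \<noteq> coordD w' s'"
proof
  assume gp: "fbar t (coordD w \<sigma>) = coordD w' s'"
  define p where "p = coordD w \<sigma>"
  define q where "q = coordD w' s'"
  define F where "F = Lv (3/4)"
  have pD: "p \<in> Dset" using F1 w sig by (simp add: p_def)
  have qD: "q \<in> Dset" using F1 w' s' by (simp add: q_def)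
  have Fp: "F p < 1" unfolding F_def p_def using Lv_lt w sig by simp
  have Fq: "F q > 1" unfolding F_def q_def using Lv_gt w' s' by simp
  have gq: "fbar t q = q" unfolding q_def using gid w' s' by simp
  have contF: "continuous_on UNIV F" unfolding F_def Lv_def by (intro continuous_intros) auto
  have op1: "open {z. 1 < F z}" by (rule open_Collect_less) (auto intro: contF continuous_intros)
  have op2: "open {z. F z < 1}" by (rule open_Collect_less) (auto intro: contF continuous_intros)
  obtain e where e: "e > 0" "ball q e \<subseteq> {z. 1 < F z}"
    using op1 Fq open_contains_ball by blast
  define d where "d = e / 2"
  have d: "d > 0" using e by (simp add: d_def)
  obtain h where h: "orient_pres_homeo h" "\<forall>z\<in>Dset. dist (fbar t z) (h z) < d"
    using gnh d unfolding op_near_homeo_def by blast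
  then obtain h' where hh: "homeomorphism Dset Dset h h'" unfolding orient_pres_homeo_def by blast
  have hD: "\<And>z. z \<in> Dset \<Longrightarrow> h z \<in> Dset" "\<And>z. z \<in> Dset \<Longrightarrow> h' z \<in> Dset"
    "\<And>z. z \<in> Dset \<Longrightarrow> h' (h z) = z" "\<And>z. z \<in> Dset \<Longrightarrow> h (h' z) = z"
    "continuous_on Dset h'"
    using hh unfolding homeomorphism_def by auto
  define K where "K = h' ` (ball q d \<inter> Dset)"
  have conK: "connected K" unfolding K_def
  proof (rule connected_continuous_image)
    show "continuous_on (ball q d \<inter> Dset) h'" using hD(5) by (rule continuous_on_subset) auto
    show "connected (ball q d \<inter> Dset)" unfolding Dset_def
      by (intro convex_connected convex_Int convex_ball convex_cball)
  qed
  have pK: "p \<in> K"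
  proof -
    have "dist (fbar t p) (h p) < d" using h(2) pD by simp
    hence "dist q (h p) < d" using gp by (simp add: p_def q_def)
    hence "h p \<in> ball q d \<inter> Dset" using hD pD by auto
    thus ?thesis unfolding K_def using hD(3)[OF pD] by (metis image_eqI)
  qed
  have qK: "q \<in> K"
  proof -
    have "dist (fbar t q) (h q) < d" using h(2) qD by simp
    hence "dist q (h q) < d" using gq by simp
    hence "h q \<in> ball q d \<inter> Dset" using hD qD by auto
    thus ?thesis unfolding K_def using hD(3)[OF qD] by (metis image_eqI)
  qed
  have sub: "K \<subseteq> ball q e \<union> {z. F z < 1}"
  proof
    fix y assume "y \<in> K"
    then obtain x where x: "x \<in> ball q d" "x \<in> Dset" "y = h' x" unfolding K_def by auto
    have yD: "y \<in> Dset" and hy: "h y = x" using x hD by auto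
    have "dist (fbar t y) (h y) < d" using h(2) yD by simp
    hence gy: "dist q (fbar t y) < e" using x hy dist_triangle[of q "fbar t y" x]
      by (simp add: d_def dist_commute)
    show "y \<in> ball q e \<union> {z. F z < 1}"
    proof (cases "F y < 1")
      case True thus ?thesis by simp
    next
      case False
      obtain w1 s1 where ws1: "w1 \<in> Sset" "s1 \<in> {0..1}" "y = coordD w1 s1" using F5[OF yD] by blast
      have "s1 \<le> 3/4"
      proof (rule ccontr)
        assume "\<not> s1 \<le> 3/4"
        hence "F y < 1" unfolding F_def using Lv_lt ws1 by simp
        thus False using False by simp
      qed
      hence "fbar t y = y" using gid ws1 by simp
      thus ?thesis using gy by simp
    qed
  qed
  have disj: "ball q e \<inter> {z. F z < 1} \<inter> K = {}" using e by auto
  have "q \<in> ball q e" using e by simp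
  with connectedD[OF conK open_ball op2 disj sub] pK qK Fp show False by blast
qed

lemma H_high: assumes "w \<in> Sset" "3/4 < \<sigma>" "\<sigma> \<le> 1"
  shows "Hmap fbar t (coordD w \<sigma>) \<in> Iset"
proof -
  have "fbar t (coordD w \<sigma>) \<in> Dset" using gD F1 assms by simp
  then obtain w1 s1 where ws: "w1 \<in> Sset" "s1 \<in> {0..1}" "fbar t (coordD w \<sigma>) = coordD w1 s1"
     "Upsilon (fbar t (coordD w \<sigma>)) = coordD w1 (min (2 * s1) 1)" using Ups_spec by blast
  have "\<not> s1 < 3/4" using G4[OF assms(1-3) ws(1)] ws by auto
  hence "min (2 * s1) 1 = 1" by simp
  thus ?thesis using ws F2 by (simp add: Hmap_def)
qed

lemma H_notI: assumes "w \<in> Sset" "0 \<le> \<sigma>" "\<sigma> < 1" "Hmap fbar t (coordD w \<sigma>) \<notin> Iset"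
  shows "\<sigma> < 1/2 \<and> Hmap fbar t (coordD w \<sigma>) = coordD w (2 * \<sigma>)"
proof (cases "\<sigma> \<le> 3/4")
  case True
  hence e: "Hmap fbar t (coordD w \<sigma>) = coordD w (min (2 * \<sigma>) 1)" using H_low assms by simp
  have "\<sigma> < 1/2"
  proof (rule ccontr)
    assume "\<not> \<sigma> < 1/2" hence "min (2 * \<sigma>) 1 = 1" by simp
    thus False using e assms F2 by simp
  qed
  thus ?thesis using e by simp
next
  case False thus ?thesis using H_high assms by simp
qed


lemma notIhat: "z n \<notin> Iset \<Longrightarrow> z \<notin> Ihat t'"
  unfolding Ihat_def by blast

lemma funpow_D: "x \<in> Dset \<Longrightarrow> (Hmap fbar t ^^ m) x \<in> Dset"
  by (induction m) (auto intro: H_D)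

lemma halve: assumes "w \<in> Sset" "0 \<le> r" "r < 1"
  shows "Hmap fbar t (coordD w (r / 2 ^ Suc m)) = coordD w (r / 2 ^ m)"
proof -
  have a: "r / 2 ^ m < 1" "0 \<le> r / 2 ^ m" using assms
    by (auto simp: divide_less_eq intro: less_le_trans[of r 1] one_le_power)
  define x where "x = r / 2 ^ m"
  have e: "r / 2 ^ Suc m = x / 2" by (simp add: x_def)
  have ax: "x < 1" "0 \<le> x" using a unfolding x_def by auto
  have b: "r / 2 ^ Suc m \<le> 3/4" "0 \<le> r / 2 ^ Suc m"
    unfolding e using ax by auto
  have b3: "2 * (r / 2 ^ Suc m) = r / 2 ^ m" unfolding e x_def by simp
  show ?thesis using H_low[OF assms(1) b(2) b(1)] b3 a by simp
qed

lemma floor_facts: assumes "(1::real) \<le> s"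
  shows "real (nat \<lfloor>s\<rfloor>) \<le> s" "s < real (nat \<lfloor>s\<rfloor>) + 1" "1 \<le> nat \<lfloor>s\<rfloor>"
proof -
  have f: "1 \<le> \<lfloor>s\<rfloor>" using assms by (simp add: le_floor_iff)
  hence e: "real (nat \<lfloor>s\<rfloor>) = of_int \<lfloor>s\<rfloor>" by simp
  show "real (nat \<lfloor>s\<rfloor>) \<le> s" "s < real (nat \<lfloor>s\<rfloor>) + 1" unfolding e by linarith+
  show "1 \<le> nat \<lfloor>s\<rfloor>" using f by (simp add: le_nat_iff)
qed

lemma Psi_low: "s < 1 \<Longrightarrow> Psi fbar t (w, s) = (\<lambda>n. coordD w (s / 2 ^ n))"
  by (simp add: Psi_def)

lemma Psi_high: "\<not> s < 1 \<Longrightarrow> Psi fbar t (w, s) = (\<lambda>n. if n < nat \<lfloor>s\<rfloor>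
   then (Hmap fbar t ^^ (nat \<lfloor>s\<rfloor> - n)) (coordD w ((s - real (nat \<lfloor>s\<rfloor>) + 1) / 2))
   else coordD w ((s - real (nat \<lfloor>s\<rfloor>) + 1) / 2 / 2 ^ (n - nat \<lfloor>s\<rfloor>)))"
  by (simp add: Psi_def Let_def)

lemma Psi_in: assumes "p \<in> Aset" shows "Psi fbar t p \<in> Dhat fbar t - Ihat t"
proof -
  obtain w s where p: "p = (w, s)" "w \<in> Sset" "0 \<le> s" using assms by (auto simp: Aset_def)
  show ?thesis
  proof (cases "s < 1")
    case True
    have "\<forall>n. coordD w (s / 2 ^ n) \<in> Dset"
    proof
      fix n
      have "s / 2 ^ n \<le> s" using p by (simp add: divide_le_eq one_le_power mult_le_cancel_left1 order_trans)
      moreover have "0 \<le> s / 2 ^ n" using p by simp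
      ultimately show "coordD w (s / 2 ^ n) \<in> Dset" using p True by (intro F1) (auto simp: divide_le_eq intro: order_trans[OF less_imp_le[OF True]])
    qed
    moreover have "\<forall>n. Hmap fbar t (coordD w (s / 2 ^ Suc n)) = coordD w (s / 2 ^ n)"
      using halve p True by blast
    moreover have "Psi fbar t p \<notin> Ihat t" using F4 p True notIhat[of "Psi fbar t p" 0] by (simp add: Psi_low)
    ultimately show ?thesis using True p by (auto simp: Dhat_def Psi_low)
  next
    case False
    define k where "k = nat \<lfloor>s\<rfloor>"
    define v where "v = (s - real k + 1) / 2"
    have k: "real k \<le> s" "s < real k + 1" "1 \<le> k" using floor_facts[of s] False by (auto simp: k_def)
    have v: "1/2 \<le> v" "v < 1" using k by (auto simp: v_def)
    have P: "Psi fbar t p = (\<lambda>n. if n < k then (Hmap fbar t ^^ (k - n)) (coordD w v)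
        else coordD w (v / 2 ^ (n - k)))" unfolding k_def v_def using Psi_high[OF False] p by simp
    have vD: "coordD w v \<in> Dset" using F1 p v by simp
    have D1: "\<forall>n. Psi fbar t p n \<in> Dset"
    proof
      fix n
      have "v / 2 ^ (n - k) \<le> v" using v by (simp add: divide_le_eq one_le_power mult_le_cancel_left1)
      hence "v / 2 ^ (n - k) \<le> 1" using v by linarith
      moreover have "0 \<le> v / 2 ^ (n - k)" using v by simp
      ultimately have "coordD w (v / 2 ^ (n - k)) \<in> Dset" using p by (intro F1) auto
      thus "Psi fbar t p n \<in> Dset" unfolding P using funpow_D[OF vD] by simp
    qed
    have D2: "\<forall>n. Hmap fbar t (Psi fbar t p (Suc n)) = Psi fbar t p n"
    proof
      fix n
      show "Hmap fbar t (Psi fbar t p (Suc n)) = Psi fbar t p n"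
      proof (cases "Suc n < k")
        case True
        hence "k - n = Suc (k - Suc n)" by simp
        thus ?thesis unfolding P using True by simp
      next
        case F2: False
        show ?thesis
        proof (cases "Suc n = k")
          case True
          hence "k - n = 1" by simp
          thus ?thesis unfolding P using True by simp
        next
          case False
          hence "Suc n - k = Suc (n - k)" "\<not> n < k" using F2 by auto
          thus ?thesis unfolding P using halve[OF p(2), of v "n - k"] v F2 by simp
        qed
      qed
    qed
    have "Psi fbar t p k \<notin> Iset" unfolding P using F4 p v by simp
    hence "Psi fbar t p \<notin> Ihat t" by (rule notIhat)
    thus ?thesis using D1 D2 by (auto simp: Dhat_def)
  qed
qed


lemma vaux: "(r::real) \<le> s \<Longrightarrow> s < r + 1 \<Longrightarrow> 0 \<le> (s - r + 1)/2 \<and> (s - r + 1)/2 < 1 \<and> 1/2 \<le> (s-r+1)/2"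
  by auto

definition Rf :: "real \<Rightarrow> real" where
  "Rf s = (if s < 1 then s else ((s - real (nat \<lfloor>s\<rfloor>) + 1) / 2) * 2 ^ (nat \<lfloor>s\<rfloor>))"

lemma Psi_tail: assumes "0 \<le> s" "nat \<lfloor>s\<rfloor> \<le> n"
  shows "Psi fbar t (w, s) n = coordD w (Rf s / 2 ^ n)"
proof (cases "s < 1")
  case True thus ?thesis by (simp add: Psi_low Rf_def)
next
  case False
  define k where "k = nat \<lfloor>s\<rfloor>"
  have "(2::real) ^ (n - k) = 2 ^ n / 2 ^ k" using assms by (simp add: power_diff k_def)
  thus ?thesis using False assms unfolding Psi_high[OF False] Rf_def k_def[symmetric] by simp
qed

lemma Rf_bounds: assumes "0 \<le> s"
  shows "0 \<le> Rf s" "Rf s < 2 ^ nat \<lfloor>s\<rfloor>" "1 \<le> s \<Longrightarrow> 2 ^ nat \<lfloor>s\<rfloor> / 2 \<le> Rf s"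
proof -
  have "0 \<le> Rf s \<and> Rf s < 2 ^ nat \<lfloor>s\<rfloor>"
  proof (cases "s < 1")
    case True
    hence "\<lfloor>s\<rfloor> = 0" using assms by (simp add: floor_eq_iff)
    thus ?thesis using True assms by (simp add: Rf_def)
  next
    case False
    have k: "real (nat \<lfloor>s\<rfloor>) \<le> s" "s < real (nat \<lfloor>s\<rfloor>) + 1" using floor_facts[of s] False by auto
    define v where "v = (s - real (nat \<lfloor>s\<rfloor>) + 1) / 2"
    have v: "0 \<le> v" "v < 1" using vaux[OF k] unfolding v_def by auto
    have "Rf s = v * 2 ^ nat \<lfloor>s\<rfloor>" using False by (simp add: Rf_def v_def)
    thus ?thesis using v by auto
  qed
  thus "0 \<le> Rf s" "Rf s < 2 ^ nat \<lfloor>s\<rfloor>" by auto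
  assume s1: "1 \<le> s"
  have k: "real (nat \<lfloor>s\<rfloor>) \<le> s" using floor_facts[of s] s1 by auto
  define v where "v = (s - real (nat \<lfloor>s\<rfloor>) + 1) / 2"
  have v: "1/2 \<le> v" using k by (auto simp: v_def)
  have "Rf s = v * 2 ^ nat \<lfloor>s\<rfloor>" using s1 by (simp add: Rf_def v_def)
  thus "2 ^ nat \<lfloor>s\<rfloor> / 2 \<le> Rf s" using v by (simp add: mult_right_mono)
qed

lemma Rf_inj: assumes "0 \<le> s" "0 \<le> s'" "Rf s = Rf s'" shows "s = s'"
proof -
  have lt1: "\<And>x. 0 \<le> x \<Longrightarrow> x < 1 \<Longrightarrow> Rf x = x" by (simp add: Rf_def)
  have ge1: "\<And>x. 1 \<le> x \<Longrightarrow> 1 \<le> Rf x"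
  proof -
    fix x :: real assume x: "1 \<le> x"
    have "1 \<le> nat \<lfloor>x\<rfloor>" using floor_facts[OF x] by simp
    hence "(2::real) ^ 1 \<le> 2 ^ nat \<lfloor>x\<rfloor>" by (intro power_increasing) auto
    thus "1 \<le> Rf x" using Rf_bounds(3)[of x] x by simp
  qed
  show ?thesis
  proof (cases "s < 1")
    case True note T = True
    show ?thesis
    proof (cases "s' < 1")
      case True thus ?thesis using T lt1 assms by simp
    next
      case False thus ?thesis using T lt1 ge1[of s'] assms by simp
    qed
  next
    case False note F = False
    show ?thesis
    proof (cases "s' < 1")
      case True thus ?thesis using F lt1 ge1[of s] assms by simp
    next
      case False
      define k where "k = nat \<lfloor>s\<rfloor>" define k' where "k' = nat \<lfloor>s'\<rfloor>"
      have kk: "\<And>a b. 0 \<le> a \<Longrightarrow> 0 \<le> b \<Longrightarrow> 1 \<le> b \<Longrightarrow> nat \<lfloor>a\<rfloor> < nat \<lfloor>b\<rfloor> \<Longrightarrow> Rf a < Rf b"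
      proof -
        fix a b :: real assume ab: "0 \<le> a" "0 \<le> b" "1 \<le> b" "nat \<lfloor>a\<rfloor> < nat \<lfloor>b\<rfloor>"
        have "Suc (nat \<lfloor>a\<rfloor>) \<le> nat \<lfloor>b\<rfloor>" using ab(4) by (rule Suc_leI)
        hence "(2::real) ^ Suc (nat \<lfloor>a\<rfloor>) \<le> 2 ^ nat \<lfloor>b\<rfloor>" by (intro power_increasing) auto
        hence "(2::real) ^ nat \<lfloor>a\<rfloor> \<le> 2 ^ nat \<lfloor>b\<rfloor> / 2" by simp
        thus "Rf a < Rf b" using Rf_bounds(2)[OF ab(1)] Rf_bounds(3)[OF ab(2) ab(3)] by linarith
      qed
      have "k = k'"
      proof (rule ccontr)
        assume "k \<noteq> k'"
        hence "k < k' \<or> k' < k" by auto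
        thus False using kk[of s s'] kk[of s' s] assms F False by (auto simp: k_def k'_def)
      qed
      hence "((s - real k + 1) / 2) * 2 ^ k = ((s' - real k + 1) / 2) * 2 ^ k"
        using assms(3) F False by (simp add: Rf_def k_def k'_def)
      thus ?thesis by simp
    qed
  qed
qed

lemma Psi_inj: "inj_on (Psi fbar t) Aset"
proof (rule inj_onI)
  fix p p' assume p: "p \<in> Aset" "p' \<in> Aset" and eq: "Psi fbar t p = Psi fbar t p'"
  obtain w s where ws: "p = (w, s)" "w \<in> Sset" "0 \<le> s" using p by (auto simp: Aset_def)
  obtain w' s' where ws': "p' = (w', s')" "w' \<in> Sset" "0 \<le> s'" using p by (auto simp: Aset_def)
  define n where "n = nat \<lfloor>s\<rfloor> + nat \<lfloor>s'\<rfloor>"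
  have e: "coordD w (Rf s / 2 ^ n) = coordD w' (Rf s' / 2 ^ n)"
    using eq Psi_tail[OF ws(3), of n w] Psi_tail[OF ws'(3), of n w'] ws ws'
    by (simp add: n_def)
  have b: "\<And>x. 0 \<le> x \<Longrightarrow> nat \<lfloor>x\<rfloor> \<le> n \<Longrightarrow> 0 \<le> Rf x / 2 ^ n \<and> Rf x / 2 ^ n < 1"
  proof -
    fix x :: real assume x: "0 \<le> x" "nat \<lfloor>x\<rfloor> \<le> n"
    have "(2::real) ^ nat \<lfloor>x\<rfloor> \<le> 2 ^ n" using x by (intro power_increasing) auto
    hence "Rf x < 2 ^ n" using Rf_bounds(2)[OF x(1)] by linarith
    thus "0 \<le> Rf x / 2 ^ n \<and> Rf x / 2 ^ n < 1" using Rf_bounds(1)[OF x(1)]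
      by (simp add: divide_less_eq)
  qed
  have bs: "0 \<le> Rf s / 2 ^ n" "Rf s / 2 ^ n < 1" using b[of s] ws by (auto simp: n_def)
  have bs': "0 \<le> Rf s' / 2 ^ n" "Rf s' / 2 ^ n < 1" using b[of s'] ws' by (auto simp: n_def)
  have "w = w' \<and> Rf s / 2 ^ n = Rf s' / 2 ^ n"
    by (rule F3[OF ws(2) ws'(2) bs bs' e])
  hence "w = w'" "Rf s = Rf s'" by auto
  thus "p = p'" using Rf_inj ws ws' by auto
qed


lemma iter_thread: assumes "z \<in> Dhat fbar t" shows "(Hmap fbar t ^^ j) (z (n + j)) = z n"
proof (induction j)
  case 0 thus ?case by simp
next
  case (Suc j)
  have "Hmap fbar t (z (Suc (n + j))) = z (n + j)" using assms by (simp add: Dhat_def)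
  hence "(Hmap fbar t ^^ Suc j) (z (n + Suc j)) = (Hmap fbar t ^^ j) (z (n + j))"
    by (simp add: funpow_Suc_right del: funpow.simps)
  thus ?case using Suc by simp
qed

lemma Psi_surj: assumes z: "z \<in> Dhat fbar t - Ihat t" shows "\<exists>p\<in>Aset. Psi fbar t p = z"
proof -
  have zD: "\<And>n. z n \<in> Dset" and zH: "\<And>n. Hmap fbar t (z (Suc n)) = z n"
    using z by (auto simp: Dhat_def)
  have ex: "\<exists>n. z n \<notin> Iset"
  proof (rule ccontr)
    assume "\<not> (\<exists>n. z n \<notin> Iset)"
    hence allI: "\<And>n. z n \<in> Iset" by blast
    have "\<forall>n. of_real (fmap t (Re (z (Suc n)))) = z n"
    proof
      fix n
      obtain x where x: "x \<in> {-1..1}" "z (Suc n) = of_real x" using allI[of "Suc n"] by (auto simp: Iset_def)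
      show "of_real (fmap t (Re (z (Suc n)))) = z n" using zH[of n] H_real[OF x(1)] x by simp
    qed
    hence "z \<in> Ihat t" using allI by (simp add: Ihat_def)
    thus False using z by simp
  qed
  define N where "N = (LEAST n. z n \<notin> Iset)"
  have zN: "z N \<notin> Iset" unfolding N_def using ex by (rule LeastI_ex)
  have below: "\<And>m. m < N \<Longrightarrow> z m \<in> Iset" unfolding N_def using not_less_Least by blast
  obtain w sN where ws: "w \<in> Sset" "sN \<in> {0..1}" "z N = coordD w sN" using F5[OF zD[of N]] by blast
  have sN1: "sN < 1"
  proof (rule ccontr)
    assume "\<not> sN < 1" hence "sN = 1" using ws by simp
    thus False using zN ws F2 by simp
  qed
  have sN0: "0 \<le> sN" using ws by simp
  have claim: "\<And>j. z (N + j) = coordD w (sN / 2 ^ j)"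
  proof -
    fix j show "z (N + j) = coordD w (sN / 2 ^ j)"
    proof (induction j)
      case 0 thus ?case using ws by simp
    next
      case (Suc j)
      have r: "0 \<le> sN / 2 ^ j" "sN / 2 ^ j < 1" using sN0 sN1
        by (auto simp: divide_less_eq intro: less_le_trans[of sN 1] one_le_power)
      have nI: "z (N + j) \<notin> Iset" using Suc F4[OF ws(1) r] by simp
      obtain w1 s1 where ws1: "w1 \<in> Sset" "s1 \<in> {0..1}" "z (N + Suc j) = coordD w1 s1"
        using F5[OF zD[of "N + Suc j"]] by blast
      have s11: "s1 < 1"
      proof (rule ccontr)
        assume "\<not> s1 < 1" hence "s1 = 1" using ws1 by simp
        hence "z (N + Suc j) \<in> Iset" using ws1 F2 by simp
        hence "Hmap fbar t (z (N + Suc j)) \<in> Iset" by (rule HI)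
        thus False using zH[of "N + j"] nI by simp
      qed
      have "Hmap fbar t (coordD w1 s1) \<notin> Iset" using zH[of "N + j"] nI ws1 by simp
      hence h: "s1 < 1/2" "Hmap fbar t (coordD w1 s1) = coordD w1 (2 * s1)"
        using H_notI[OF ws1(1) _ s11] ws1 by auto
      hence "coordD w1 (2 * s1) = coordD w (sN / 2 ^ j)" using zH[of "N + j"] ws1 Suc by simp
      moreover have "0 \<le> 2 * s1" "2 * s1 < 1" using ws1 h by auto
      ultimately have "w1 = w \<and> 2 * s1 = sN / 2 ^ j" using F3[OF ws1(1) ws(1) _ _ r] by blast
      hence "w1 = w" "s1 = sN / 2 ^ Suc j" by auto
      thus ?case using ws1 by simp
    qed
  qed
  show ?thesis
  proof (cases "N = 0")
    case True
    have "Psi fbar t (w, sN) = z"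
      using claim True sN1 by (simp add: Psi_low fun_eq_iff)
    moreover have "(w, sN) \<in> Aset" using ws by (simp add: Aset_def)
    ultimately show ?thesis by blast
  next
    case False
    have half: "1/2 \<le> sN"
    proof (rule ccontr)
      assume "\<not> 1/2 \<le> sN"
      hence h: "Hmap fbar t (coordD w sN) = coordD w (2 * sN)" "2 * sN < 1"
        using H_low[OF ws(1) sN0] by auto
      have "z (N - 1) = Hmap fbar t (z N)" using zH[of "N - 1"] False by simp
      hence "z (N - 1) \<notin> Iset" using h ws F4[OF ws(1) _ h(2)] sN0 by simp
      thus False using below[of "N - 1"] False by simp
    qed
    define s where "s = real N + 2 * sN - 1"
    have fl: "\<lfloor>s\<rfloor> = int N" unfolding s_def using half sN1 by (simp add: floor_eq_iff)
    hence k: "nat \<lfloor>s\<rfloor> = N" by simp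
    have s1: "\<not> s < 1" using False half by (simp add: s_def)
    have v: "(s - real N + 1) / 2 = sN" by (simp add: s_def)
    have "Psi fbar t (w, s) = z"
    proof
      fix n
      show "Psi fbar t (w, s) n = z n"
      proof (cases "n < N")
        case True
        have "(Hmap fbar t ^^ (N - n)) (z (n + (N - n))) = z n"
          using iter_thread[of z "N - n" n] z by simp
        thus ?thesis using True unfolding Psi_high[OF s1] k v using ws by simp
      next
        case False
        have "z (N + (n - N)) = coordD w (sN / 2 ^ (n - N))" by (rule claim)
        thus ?thesis using False unfolding Psi_high[OF s1] k v by simp
      qed
    qed
    moreover have "(w, s) \<in> Aset" using ws s1 by (simp add: Aset_def)
    ultimately show ?thesis by blast
  qed
qed

end

theorem mainTheorem6:
  fixes fbar :: "real \<Rightarrow> complex \<Rightarrow> complex" and t :: real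
  assumes "unwrapping fbar" and "t \<in> Jset"
  shows "bij_betw (Psi fbar t) Aset (Dhat fbar t - Ihat t)"
  unfolding bij_betw_def
  using Psi_inj[OF assms] Psi_in[OF assms] Psi_surj[OF assms] by blast

end
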